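(* Assume the standing setup below (with $t_{\min}$ the known initial moment) and fix $\hat x\in\mathbb S^2$. (i) For every $y\in K_D^{(\hat x)}$ there exists $\epsilon_0=\epsilon_0(y)>0$ such that $\phi^{(\hat x)}_{y,\eta,\epsilon}\in\mathrm{Range}(L_D^{(\hat x)})$ for all $\epsilon\in(0,\epsilon_0)$ and all $\eta\in(t_{\min},t_{\max}]$. (ii) Let $\eta\in(t_{\min},t_{\max}]$. If $y\notin\overline{K_{D,\eta}^{(\hat x)}}$, then $\phi^{(\hat x)}_{y,\eta,\epsilon}\notin\mathrm{Range}(L_D^{(\hat x)})$ for all $\epsilon>0$.
   Context: Standing setup. $D\subset\mathbb R^3$ is a bounded Lipschitz domain (open and connected) with $\mathbb R^3\setminus\overline D$ connected. $0\le t_{\min}<t_{\max}$, and $S\in C([t_{\min},t_{\max}];L^\infty(D))$ is real-valued with $S(x,t)\ge c_0>0$ for a.e. $x\in D$ and all $t\in[t_{\min},t_{\max}]$. Let $0\le k_{\min}<k_{\max}$, $K=(k_{\max}-k_{\min})/2$. Set $X_D=L^2(D\times(t_{\min},t_{\max}))$ and define $L_D^{(\hat x)}:X_D\to L^2(0,K)$ by $(L_D^{(\hat x)}u)(\tau)=\int_{t_{\min}}^{t_{\max}}\int_D e^{{\rm i}\tau(t-\hat x\cdot y)}u(y,t)\,dy\,dt$, $\tau\in[0,K]$. For $\hat x\in\mathbb S^2$ write $\hat x\cdot D=\{\hat x\cdot y:y\in D\}$. For $y\in\mathbb R^3$, $\epsilon>0$, $\eta>t_{\min}$, the test function $\phi^{(\hat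 x)}_{y,\eta,\epsilon}\in L^2(0,K)$ is $\phi^{(\hat x)}_{y,\eta,\epsilon}(k)=\frac{1}{(\eta-t_{\min})|B_\epsilon(y)|}\int_{t_{\min}}^{\eta}\int_{B_\epsilon(y)}e^{{\rm i}k(t-\hat x\cdot z)}\,dz\,dt$, $k\in[0,K]$, where $B_\epsilon(y)$ is the open ball of radius $\epsilon$ centered at $y$ and $|B_\epsilon(y)|$ its volume. The strips are $K_D^{(\hat x)}=\{y\in\mathbb R^3:\inf(\hat x\cdot D)<\hat x\cdot y<\sup(\hat x\cdot D)\}$ and $K_{D,\eta}^{(\hat x)}=\{y\in\mathbb R^3:\inf(\hat x\cdot D)-t_{\max}+\eta<\hat x\cdot y<\sup(\hat x\cdot D)\}$. *)

theory Defs
  imports "HOL-Analysis.Analysis"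
begin

text \<open>Bounded Lipschitz domain in R^3: bounded, open, connected, and near every
boundary point p, in some local orthonormal frame (direction e), D coincides with
the region strictly below the graph of a Lipschitz function of the coordinates
orthogonal to e.\<close>
definition lipschitz_domain :: "(real^3) set \<Rightarrow> bool" where
  "lipschitz_domain D \<longleftrightarrow> open D \<and> connected D \<and> D \<noteq> {} \<and>
     (\<forall>p\<in>frontier D. \<exists>r>0. \<exists>e::real^3. \<exists>g::real^3 \<Rightarrow> real. \<exists>L\<ge>0.
        norm e = 1 \<and> L-lipschitz_on UNIV g \<and>
        (\<forall>x. g x = g (x - (x \<bullet> e) *\<^sub>R e)) \<and>
        D \<inter> ball p r = {x \<in> ball p r. x \<bullet> e < g x})"

definition L2_on :: "'a::euclidean_space set \<Rightarrow> ('a \<Rightarrow> complex) \<Rightarrow> bool" where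
  "L2_on A u \<longleftrightarrow> set_borel_measurable lebesgue A u \<and>
     set_integrable lebesgue A (\<lambda>x. (cmod (u x))\<^sup>2)"

definition L_op :: "(real^3) set \<Rightarrow> real \<Rightarrow> real \<Rightarrow> real^3 \<Rightarrow> ((real^3) \<times> real \<Rightarrow> complex) \<Rightarrow> real \<Rightarrow> complex" where
  "L_op D tmin tmax xh u \<tau> =
     set_lebesgue_integral lebesgue (D \<times> {tmin<..<tmax})
       (\<lambda>(y,t). exp (\<i> * complex_of_real (\<tau> * (t - xh \<bullet> y))) * u (y,t))"

definition in_range_L :: "(real^3) set \<Rightarrow> real \<Rightarrow> real \<Rightarrow> real \<Rightarrow> real^3 \<Rightarrow> (real \<Rightarrow> complex) \<Rightarrow> bool" where
  "in_range_L D tmin tmax K xh \<phi> \<longleftrightarrow>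
     (\<exists>u. L2_on (D \<times> {tmin<..<tmax}) u \<and>
          (AE \<tau> in lebesgue. \<tau> \<in> {0..K} \<longrightarrow> \<phi> \<tau> = L_op D tmin tmax xh u \<tau>))"

definition phi_test :: "real \<Rightarrow> real^3 \<Rightarrow> real^3 \<Rightarrow> real \<Rightarrow> real \<Rightarrow> real \<Rightarrow> complex" where
  "phi_test tmin xh y \<eta> \<epsilon> k =
     complex_of_real (1 / ((\<eta> - tmin) * measure lebesgue (ball y \<epsilon>))) *
     set_lebesgue_integral lebesgue (ball y \<epsilon> \<times> {tmin..\<eta>})
       (\<lambda>(z,t). exp (\<i> * complex_of_real (k * (t - xh \<bullet> z))))"

definition strip_K :: "(real^3) set \<Rightarrow> real^3 \<Rightarrow> (real^3) set" where
  "strip_K D xh = {y. Inf ((\<lambda>z. xh \<bullet> z) ` D) < xh \<bullet> y \<and> xh \<bullet> y < Sup ((\<lambda>z. xh \<bullet> z) ` D)}"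

definition strip_K_eta :: "(real^3) set \<Rightarrow> real \<Rightarrow> real \<Rightarrow> real^3 \<Rightarrow> (real^3) set" where
  "strip_K_eta D tmax \<eta> xh =
     {y. Inf ((\<lambda>z. xh \<bullet> z) ` D) - tmax + \<eta> < xh \<bullet> y \<and> xh \<bullet> y < Sup ((\<lambda>z. xh \<bullet> z) ` D)}"

end

theory Submission
  imports Defs "HOL-Complex_Analysis.Complex_Analysis"
begin


lemma summable_exp_real: "summable (\<lambda>n. (x::real)^n / fact n)"
  using summable_exp[of x] by (simp add: divide_inverse mult.commute)

lemma entire_integral:
  fixes M :: "'a measure" and w :: "'a \<Rightarrow> complex" and s :: "'a \<Rightarrow> real"
  assumes w: "integrable M w" and s[measurable]: "s \<in> borel_measurable M"
    and R: "\<And>p. w p \<noteq> 0 \<Longrightarrow> \<bar>s p\<bar> \<le> R"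
  shows "(\<lambda>z. \<integral>p. exp (\<i> * z * of_real (s p)) * w p \<partial>M) holomorphic_on UNIV"
proof -
  have wm[measurable]: "w \<in> borel_measurable M" using w by auto
  have R0: "\<And>p. \<bar>s p\<bar> * cmod (w p) \<le> R * cmod (w p)"
    using R by (metis mult_right_mono norm_ge_zero norm_zero mult_zero_right order_refl)
  define c where "c n = (\<integral>p. (\<i> * of_real (s p))^n / of_nat (fact n) * w p \<partial>M)" for n
  have key: "(\<lambda>n. c n * z^n) sums (\<integral>p. exp (\<i> * z * of_real (s p)) * w p \<partial>M)" for z
  proof -
    define f where "f n p = (\<i> * z * of_real (s p))^n / of_nat (fact n) * w p" for n p
    have nf: "norm (f n p) = (cmod z * \<bar>s p\<bar>)^n / fact n * cmod (w p)" for n p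
      by (simp add: f_def norm_mult norm_divide norm_power)
    have nfle: "norm (f n p) \<le> (cmod z * R)^n / fact n * cmod (w p)" for n p
    proof (cases "w p = 0")
      case True then show ?thesis by (simp add: nf)
    next
      case False
      then have "\<bar>s p\<bar> \<le> R" using R by auto
      then have "(cmod z * \<bar>s p\<bar>)^n \<le> (cmod z * R)^n"
        by (intro power_mono mult_left_mono) auto
      then show ?thesis unfolding nf
        by (intro mult_right_mono divide_right_mono) auto
    qed
    have intf: "integrable M (f n)" for n
    proof (rule Bochner_Integration.integrable_bound)
      show "integrable M (\<lambda>p. (cmod z * R)^n / fact n * cmod (w p))"
        using w by (intro integrable_mult_right integrable_norm)
      show "f n \<in> borel_measurable M" unfolding f_def by measurable
      show "AE x in M. norm (f n x) \<le> norm ((cmod z * R)^n / fact n * cmod (w x))"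
        using nfle by (intro AE_I2) (smt (verit, ccfv_SIG) real_norm_def)
    qed
    have summ: "summable (\<lambda>n. norm (f n p))" for p
      unfolding nf by (intro summable_mult2 summable_exp_real)
    have summ2: "summable (\<lambda>n. \<integral>p. norm (f n p) \<partial>M)"
    proof (rule summable_comparison_test)
      show "\<exists>N. \<forall>n\<ge>N. norm (\<integral>p. norm (f n p) \<partial>M) \<le> (cmod z * R)^n / fact n * (\<integral>p. cmod (w p) \<partial>M)"
      proof (intro exI allI impI)
        fix n
        have "norm (\<integral>p. norm (f n p) \<partial>M) = (\<integral>p. norm (f n p) \<partial>M)"
          by (simp add: integral_nonneg_AE)
        also have "\<dots> \<le> (\<integral>p. (cmod z * R)^n / fact n * cmod (w p) \<partial>M)"
          using intf w nfle by (intro integral_mono) (auto intro: integrable_mult_right integrable_norm)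
        also have "\<dots> = (cmod z * R)^n / fact n * (\<integral>p. cmod (w p) \<partial>M)" by simp
        finally show "norm (\<integral>p. norm (f n p) \<partial>M) \<le> (cmod z * R)^n / fact n * (\<integral>p. cmod (w p) \<partial>M)" .
      qed
      show "summable (\<lambda>n. (cmod z * R)^n / fact n * (\<integral>p. cmod (w p) \<partial>M))"
        by (intro summable_mult2 summable_exp_real)
    qed
    have S: "(\<lambda>n. integral\<^sup>L M (f n)) sums (\<integral>p. (\<Sum>n. f n p) \<partial>M)"
      by (rule sums_integral[OF intf AE_I2[OF summ] summ2])
    have E: "(\<Sum>n. f n p) = exp (\<i> * z * of_real (s p)) * w p" for p
    proof -
      have "(\<lambda>n. (\<i> * z * of_real (s p))^n /\<^sub>R fact n) sums exp (\<i> * z * of_real (s p))"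
        by (rule exp_converges)
      then have "(\<lambda>n. (\<i> * z * of_real (s p))^n /\<^sub>R fact n * w p) sums (exp (\<i> * z * of_real (s p)) * w p)"
        by (rule sums_mult2)
      then show ?thesis unfolding f_def
        by (simp add: sums_iff scaleR_conv_of_real divide_inverse mult.commute)
    qed
    have I: "integral\<^sup>L M (f n) = c n * z^n" for n
    proof -
      have "f n = (\<lambda>p. z^n * ((\<i> * of_real (s p))^n / of_nat (fact n) * w p))"
        by (auto simp: f_def power_mult_distrib fun_eq_iff)
      then show ?thesis by (simp add: c_def mult.commute)
    qed
    show ?thesis using S unfolding E I .
  qed
  have eq: "(\<lambda>z. \<integral>p. exp (\<i> * z * of_real (s p)) * w p \<partial>M) = (\<lambda>z. \<Sum>n. c n * z^n)"
    using key by (auto simp: sums_iff fun_eq_iff)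
  have "summable (\<lambda>n. c n * y^n)" for y using key sums_summable by blast
  then have "\<And>x. ((\<lambda>z. \<Sum>n. c n * z^n) has_field_derivative (\<Sum>n. diffs c n * x^n)) (at x)"
    by (rule termdiffs_strong_converges_everywhere)
  then show ?thesis unfolding eq
    using holomorphic_on_open open_UNIV by blast
qed



lemma open_pos_measure:
  fixes S :: "'a::euclidean_space set"
  assumes "open S" "x \<in> S" shows "0 < emeasure lebesgue S"
proof -
  obtain e where e: "0 < e" "ball x e \<subseteq> S" using assms openE by blast
  then obtain a b where box: "x \<in> box a b" "box a b \<subseteq> S"
    by (metis rational_boxes order_trans)
  then have "0 < emeasure lebesgue (box a b)"
    by (auto simp: emeasure_lborel_box_eq mem_box algebra_simps intro!: prod_pos)
  also have "\<dots> \<le> emeasure lebesgue S"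
    using assms box by (auto intro!: emeasure_mono)
  finally show ?thesis .
qed

lemma s_meas: "(\<lambda>p::(real^3)\<times>real. snd p - xh \<bullet> fst p) \<in> borel_measurable lebesgue"
  by (intro measurable_completion) (simp add: borel_measurable_continuous_onI continuous_intros)

lemma inner_dist: "norm (xh::real^3) = 1 \<Longrightarrow> \<bar>xh \<bullet> a - xh \<bullet> b\<bar> \<le> dist a b"
  by (metis dist_norm inner_diff_right mult_1 Cauchy_Schwarz_ineq2)

lemma growth_contra:
  fixes w1 :: "'a::euclidean_space \<Rightarrow> complex" and s :: "'a \<Rightarrow> real"
  assumes w1: "integrable lebesgue w1" and s[measurable]: "s \<in> borel_measurable lebesgue"
    and b1: "\<And>p. w1 p \<noteq> 0 \<Longrightarrow> \<theta> * s p \<le> T"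
    and B': "open B'" "p0 \<in> B'" "B' \<subseteq> B" and c: "c > 0" and \<delta>: "\<delta> > 0"
    and b2: "\<And>p. p \<in> B' \<Longrightarrow> T + \<delta> \<le> \<theta> * s p"
    and B: "B \<in> sets lebesgue" "emeasure lebesgue B < \<infinity>"
    and R2: "\<And>p. p \<in> B \<Longrightarrow> \<bar>s p\<bar> \<le> R2"
    and eq: "\<And>\<sigma>. \<sigma> \<ge> 0 \<Longrightarrow> (\<integral>p. exp (of_real (\<theta> * \<sigma> * s p)) * w1 p \<partial>lebesgue)
               = (\<integral>p. exp (of_real (\<theta> * \<sigma> * s p)) * of_real (c * indicator B p) \<partial>lebesgue)"
  shows False
proof -
  have B'm: "B' \<in> sets lebesgue"
    using B' by (simp add: borel_open sets_completionI_sets)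
  have fin': "emeasure lebesgue B' < \<infinity>"
    using B B'm B' emeasure_mono by (metis order.strict_trans1)
  have "0 < emeasure lebesgue B'" using open_pos_measure B' by blast
  then have m: "0 < measure lebesgue B'"
    using fin' by (simp add: measure_def enn2real_positive_iff)
  define N1 where "N1 = (\<integral>p. cmod (w1 p) \<partial>lebesgue)"
  have ineq: "c * measure lebesgue B' * exp (\<sigma> * (T + \<delta>)) \<le> exp (\<sigma> * T) * N1" if \<sigma>: "\<sigma> \<ge> 0" for \<sigma>
  proof -
    have intB: "integrable lebesgue (\<lambda>p. exp (\<theta> * \<sigma> * s p) * (c * indicator B p))"
    proof (rule Bochner_Integration.integrable_bound)
      show "integrable lebesgue (\<lambda>p. exp (\<bar>\<theta>\<bar> * \<sigma> * R2) * c * indicator B p)"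
        using B by (intro integrable_mult_right integrable_real_indicator) auto
      show "(\<lambda>p. exp (\<theta> * \<sigma> * s p) * (c * indicator B p)) \<in> borel_measurable lebesgue"
        using B by measurable
      show "AE x in lebesgue. norm (exp (\<theta> * \<sigma> * s x) * (c * indicator B x)) \<le> norm (exp (\<bar>\<theta>\<bar> * \<sigma> * R2) * c * indicator B x)"
      proof (intro AE_I2)
        fix x show "norm (exp (\<theta> * \<sigma> * s x) * (c * indicator B x)) \<le> norm (exp (\<bar>\<theta>\<bar> * \<sigma> * R2) * c * indicator B x)"
        proof (cases "x \<in> B")
          case True
          have "\<theta> * \<sigma> * s x \<le> \<bar>\<theta>\<bar> * \<sigma> * R2"
          proof -
            have "\<theta> * \<sigma> * s x \<le> \<bar>\<theta> * \<sigma> * s x\<bar>" by simp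
            also have "\<dots> = \<bar>\<theta>\<bar> * \<sigma> * \<bar>s x\<bar>" using \<sigma> by (simp add: abs_mult)
            also have "\<dots> \<le> \<bar>\<theta>\<bar> * \<sigma> * R2" using R2[OF True] \<sigma> by (intro mult_left_mono) auto
            finally show ?thesis .
          qed
          then show ?thesis using True c by (simp add: abs_mult)
        qed simp
      qed
    qed
    have int1: "integrable lebesgue (\<lambda>p. exp (\<sigma> * T) * cmod (w1 p))"
      using w1 by (intro integrable_mult_right integrable_norm)
    have "c * measure lebesgue B' * exp (\<sigma> * (T + \<delta>)) = (\<integral>p. exp (\<sigma> * (T + \<delta>)) * (c * indicator B' p) \<partial>lebesgue)"
      using B'm fin' by (simp add: measure_def)
    also have "\<dots> \<le> (\<integral>p. exp (\<theta> * \<sigma> * s p) * (c * indicator B p) \<partial>lebesgue)"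
    proof (rule integral_mono[OF _ intB])
      show "integrable lebesgue (\<lambda>p. exp (\<sigma> * (T + \<delta>)) * (c * indicator B' p))"
        using B'm fin' by (intro integrable_mult_right integrable_real_indicator) auto
      fix p show "exp (\<sigma> * (T + \<delta>)) * (c * indicator B' p) \<le> exp (\<theta> * \<sigma> * s p) * (c * indicator B p)"
      proof (cases "p \<in> B'")
        case True
        then have "p \<in> B" using B' by auto
        have "\<sigma> * (T + \<delta>) \<le> \<theta> * \<sigma> * s p"
          using mult_left_mono[OF b2[OF True] \<sigma>] by (simp add: mult_ac)
        then show ?thesis using True \<open>p\<in>B\<close> c by simp
      next
        case False then show ?thesis using c by (simp add: indicator_def)
      qed
    qed
    also have "\<dots> = norm (\<integral>p. exp (of_real (\<theta> * \<sigma> * s p)) * of_real (c * indicator B p) \<partial>lebesgue :: complex)"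
    proof -
      have eqf: "(\<lambda>p. exp (of_real (\<theta> * \<sigma> * s p)) * of_real (c * indicator B p) :: complex)
           = (\<lambda>p. of_real (exp (\<theta> * \<sigma> * s p) * (c * indicator B p)))"
        by (intro ext) (metis exp_of_real of_real_mult)
      moreover have "0 \<le> (\<integral>p. exp (\<theta> * \<sigma> * s p) * (c * indicator B p) \<partial>lebesgue)"
        using c by (intro integral_nonneg_AE AE_I2) auto
      ultimately show ?thesis by (subst eqf, subst integral_complex_of_real, subst norm_of_real) simp
    qed
    also have "\<dots> = norm (\<integral>p. exp (of_real (\<theta> * \<sigma> * s p)) * w1 p \<partial>lebesgue)"
      using eq[OF \<sigma>] by simp
    also have "\<dots> \<le> (\<integral>p. norm (exp (of_real (\<theta> * \<sigma> * s p)) * w1 p) \<partial>lebesgue)"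
      by (rule integral_norm_bound)
    also have "\<dots> \<le> (\<integral>p. exp (\<sigma> * T) * cmod (w1 p) \<partial>lebesgue)"
    proof (rule integral_mono[OF _ int1])
      show "integrable lebesgue (\<lambda>p. norm (exp (of_real (\<theta> * \<sigma> * s p)) * w1 p))"
      proof (rule Bochner_Integration.integrable_bound[OF int1])
        show "(\<lambda>p. norm (exp (complex_of_real (\<theta> * \<sigma> * s p)) * w1 p)) \<in> borel_measurable lebesgue"
          using w1 by measurable
        show "AE x in lebesgue. norm (norm (exp (complex_of_real (\<theta> * \<sigma> * s x)) * w1 x)) \<le> norm (exp (\<sigma> * T) * cmod (w1 x))"
        proof (intro AE_I2)
          fix x show "norm (norm (exp (complex_of_real (\<theta> * \<sigma> * s x)) * w1 x)) \<le> norm (exp (\<sigma> * T) * cmod (w1 x))"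
          proof (cases "w1 x = 0")
            case False
            have "\<theta> * \<sigma> * s x \<le> \<sigma> * T" using mult_left_mono[OF b1[OF False] \<sigma>] by (simp add: mult_ac)
            then show ?thesis by (simp add: norm_mult exp_of_real[symmetric] mult_right_mono)
          qed simp
        qed
      qed
      fix p
      show "norm (exp (of_real (\<theta> * \<sigma> * s p)) * w1 p) \<le> exp (\<sigma> * T) * cmod (w1 p)"
      proof (cases "w1 p = 0")
        case False
        have "\<theta> * \<sigma> * s p \<le> \<sigma> * T" using mult_left_mono[OF b1[OF False] \<sigma>] by (simp add: mult_ac)
        then show ?thesis by (simp add: norm_mult exp_of_real[symmetric] mult_right_mono)
      qed simp
    qed
    also have "\<dots> = exp (\<sigma> * T) * N1" by (simp add: N1_def)
    finally show ?thesis .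
  qed
  define M where "M = c * measure lebesgue B'"
  have M: "M > 0" using c m by (simp add: M_def)
  define \<sigma> where "\<sigma> = (N1 / M + 1) / \<delta>"
  have N1: "N1 \<ge> 0" unfolding N1_def by (intro integral_nonneg_AE) auto
  have \<sigma>0: "\<sigma> \<ge> 0" using N1 M \<delta> by (simp add: \<sigma>_def)
  have "M * exp (\<sigma> * \<delta>) \<le> N1"
    using ineq[OF \<sigma>0] by (simp add: M_def distrib_left exp_add mult_ac)
  moreover have "M * (1 + \<sigma> * \<delta>) \<le> M * exp (\<sigma> * \<delta>)"
    using M by (intro mult_left_mono) (auto simp: exp_ge_add_one_self add.commute)
  moreover have "M * (1 + \<sigma> * \<delta>) = M + N1 + M" using M \<delta> by (simp add: \<sigma>_def field_simps)
  ultimately show False using M by linarith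
qed



lemma le_one_plus_sq: "(x::real) \<le> 1 + x^2"
proof (cases "x \<le> 1")
  case False
  then have "x \<le> x * x" by (simp add: mult_le_cancel_left1)
  then show ?thesis by (simp add: power2_eq_square)
qed (smt (verit) zero_le_power2)

lemma part2:
  fixes D :: "(real^3) set" and xh y :: "real^3"
  assumes D: "open D" "bounded D" "D \<noteq> {}" and t: "tmin < \<eta>" "\<eta> \<le> tmax" and K: "0 < K"
    and xh: "norm xh = 1" and \<epsilon>: "\<epsilon> > 0" and y: "y \<notin> strip_K_eta D tmax \<eta> xh"
  shows "\<not> in_range_L D tmin tmax K xh (phi_test tmin xh y \<eta> \<epsilon>)"
proof
  assume "in_range_L D tmin tmax K xh (phi_test tmin xh y \<eta> \<epsilon>)"
  then obtain u where u: "L2_on (D \<times> {tmin<..<tmax}) u"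
    and ae: "AE \<tau> in lebesgue. \<tau> \<in> {0..K} \<longrightarrow> phi_test tmin xh y \<eta> \<epsilon> \<tau> = L_op D tmin tmax xh u \<tau>"
    unfolding in_range_L_def by blast
  define A where "A = D \<times> {tmin<..<tmax}"
  define I where "I = Inf ((\<lambda>z. xh \<bullet> z) ` D)"
  define Sp where "Sp = Sup ((\<lambda>z. xh \<bullet> z) ` D)"
  have bdd: "bounded ((\<lambda>z. xh \<bullet> z) ` D)"
    using D(2) by (intro bounded_linear_image bounded_linear_inner_right)
  have IS: "I \<le> xh \<bullet> w \<and> xh \<bullet> w \<le> Sp" if "w \<in> D" for w
    using bdd that unfolding I_def Sp_def
    by (auto intro!: cInf_lower cSup_upper bounded_imp_bdd_below bounded_imp_bdd_above)
  have "A \<in> lmeasurable" unfolding A_def using D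
    by (intro lmeasurable_open) (auto simp: open_Times bounded_Times)
  then have Am[measurable]: "A \<in> sets lebesgue" and Af: "emeasure lebesgue A < \<infinity>"
    by (auto simp: fmeasurable_def)
  define w1 where "w1 p = indicator A p *\<^sub>R u p" for p
  have w1m[measurable]: "w1 \<in> borel_measurable lebesgue"
    using u unfolding L2_on_def set_borel_measurable_def w1_def A_def by simp
  have u2: "integrable lebesgue (\<lambda>p. indicator A p *\<^sub>R (cmod (u p))^2)"
    using u unfolding L2_on_def set_integrable_def A_def by simp
  have w1i: "integrable lebesgue w1"
  proof (rule Bochner_Integration.integrable_bound)
    show "integrable lebesgue (\<lambda>p. indicator A p + indicator A p *\<^sub>R (cmod (u p))^2)"
      using u2 Am Af by (intro Bochner_Integration.integrable_add) auto
    show "w1 \<in> borel_measurable lebesgue" by fact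
    show "AE p in lebesgue. norm (w1 p) \<le> norm (indicator A p + indicator A p *\<^sub>R (cmod (u p))^2 :: real)"
      by (intro AE_I2) (auto simp: w1_def indicator_def le_one_plus_sq)
  qed
  define s where "s p = snd p - xh \<bullet> fst p" for p :: "(real^3) \<times> real"
  have sm[measurable]: "s \<in> borel_measurable lebesgue" using s_meas unfolding s_def .
  have sA: "tmin - Sp < s p \<and> s p < tmax - I" if "p \<in> A" for p
    using that IS[of "fst p"] unfolding A_def s_def by (auto simp: mem_Times_iff)
  have w1A: "p \<in> A" if "w1 p \<noteq> 0" for p
    using that by (auto simp: w1_def indicator_def split: if_splits)
  define G1 where "G1 z = (\<integral>p. exp (\<i> * z * of_real (s p)) * w1 p \<partial>lebesgue)" for z
  have hol1: "G1 holomorphic_on UNIV"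
    unfolding G1_def
  proof (rule entire_integral[OF w1i sm, of "\<bar>tmin\<bar> + \<bar>tmax\<bar> + \<bar>I\<bar> + \<bar>Sp\<bar>"])
    fix p assume "w1 p \<noteq> 0"
    then have "tmin - Sp < s p \<and> s p < tmax - I" using sA w1A by blast
    then show "\<bar>s p\<bar> \<le> \<bar>tmin\<bar> + \<bar>tmax\<bar> + \<bar>I\<bar> + \<bar>Sp\<bar>" by arith
  qed
  have L1: "L_op D tmin tmax xh u \<tau> = G1 (of_real \<tau>)" for \<tau>
    unfolding L_op_def G1_def set_lebesgue_integral_def w1_def s_def A_def
    by (intro Bochner_Integration.integral_cong refl) (auto split: prod.splits simp: mult_ac)
  define B where "B = ball y \<epsilon> \<times> {tmin..\<eta>}"
  define mB where "mB = measure lebesgue (ball y \<epsilon>)"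
  have "0 < emeasure lebesgue (ball y \<epsilon>)" using open_pos_measure[of "ball y \<epsilon>" y] \<epsilon> by auto
  then have mB: "mB > 0" unfolding mB_def
    using lmeasurable_ball[of y \<epsilon>] by (simp add: measure_def enn2real_positive_iff fmeasurable_def)
  define c where "c = 1 / ((\<eta> - tmin) * mB)"
  have c: "c > 0" using mB t by (simp add: c_def)
  have "B = (ball y \<epsilon> \<times> UNIV) \<inter> (UNIV \<times> {tmin..\<eta>})" by (auto simp: B_def)
  moreover have "(ball y \<epsilon> \<times> UNIV) \<in> sets borel"
    by (intro borel_open open_Times) auto
  moreover have "(UNIV \<times> {tmin..\<eta>}) \<in> sets borel"
    by (intro borel_closed closed_Times) auto
  ultimately have Bm[measurable]: "B \<in> sets lebesgue" by (metis sets.Int sets_completionI_sets sets_lborel)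
  have "ball y \<epsilon> \<times> {tmin - 1<..<\<eta> + 1} \<in> lmeasurable"
    by (intro lmeasurable_open) (auto simp: open_Times bounded_Times)
  moreover have "B \<subseteq> ball y \<epsilon> \<times> {tmin - 1<..<\<eta> + 1}" by (auto simp: B_def)
  ultimately have Bf: "emeasure lebesgue B < \<infinity>"
    using emeasure_mono[of B "ball y \<epsilon> \<times> {tmin - 1<..<\<eta> + 1}" lebesgue]
    by (auto simp: fmeasurable_def)
  define w2 where "w2 p = (of_real (c * indicator B p) :: complex)" for p
  have w2i: "integrable lebesgue w2" unfolding w2_def
    using Bm Bf by (intro integrable_of_real integrable_mult_right integrable_real_indicator)
  have sB: "\<bar>s p\<bar> \<le> \<bar>tmin\<bar> + \<bar>\<eta>\<bar> + \<bar>xh \<bullet> y\<bar> + \<epsilon>" if "p \<in> B" for p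
  proof -
    obtain a b where p: "p = (a, b)" by force
    have "\<bar>xh \<bullet> a - xh \<bullet> y\<bar> \<le> dist a y" by (rule inner_dist[OF xh])
    moreover have "dist a y < \<epsilon>" using that by (auto simp: p B_def dist_commute)
    ultimately show ?thesis using that by (auto simp: p B_def s_def)
  qed
  define G2 where "G2 z = (\<integral>p. exp (\<i> * z * of_real (s p)) * w2 p \<partial>lebesgue)" for z
  have hol2: "G2 holomorphic_on UNIV"
    unfolding G2_def
  proof (rule entire_integral[OF w2i sm, of "\<bar>tmin\<bar> + \<bar>\<eta>\<bar> + \<bar>xh \<bullet> y\<bar> + \<epsilon>"])
    fix p assume "w2 p \<noteq> 0"
    then have "p \<in> B" by (auto simp: w2_def indicator_def split: if_splits)
    then show "\<bar>s p\<bar> \<le> \<bar>tmin\<bar> + \<bar>\<eta>\<bar> + \<bar>xh \<bullet> y\<bar> + \<epsilon>" by (rule sB)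
  qed
  have P2: "phi_test tmin xh y \<eta> \<epsilon> \<tau> = G2 (of_real \<tau>)" for \<tau>
  proof -
    have "G2 (of_real \<tau>) = (\<integral>p. of_real c * (indicator B p *\<^sub>R exp (\<i> * of_real \<tau> * of_real (s p))) \<partial>lebesgue)"
      unfolding G2_def w2_def
      by (intro Bochner_Integration.integral_cong refl) (auto simp: indicator_def)
    also have "\<dots> = of_real c * (\<integral>p. indicator B p *\<^sub>R exp (\<i> * of_real \<tau> * of_real (s p)) \<partial>lebesgue)"
      by (rule integral_mult_right_zero)
    finally show ?thesis
      unfolding phi_test_def set_lebesgue_integral_def c_def mB_def B_def s_def
      by (auto split: prod.splits simp: mult_ac intro!: arg_cong[where f="\<lambda>x. _ * x"] Bochner_Integration.integral_cong)
  qed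
  define F where "F z = G1 z - G2 z" for z
  have holF: "F holomorphic_on UNIV" unfolding F_def using hol1 hol2 by (intro holomorphic_intros)
  have aeF: "AE \<tau> in lebesgue. \<tau> \<in> {0..K} \<longrightarrow> F (of_real \<tau>) = 0"
    using ae by eventually_elim (auto simp: F_def L1 P2)
  then obtain N where N0: "{\<tau>\<in>space lebesgue. \<not> (\<tau> \<in> {0..K} \<longrightarrow> F (of_real \<tau>) = 0)} \<subseteq> N"
      "emeasure lebesgue N = 0" "N \<in> sets lebesgue"
    by (rule AE_E)
  then have N: "N \<in> null_sets lebesgue" "{\<tau>\<in>space lebesgue. \<not> (\<tau> \<in> {0..K} \<longrightarrow> F (of_real \<tau>) = 0)} \<subseteq> N"
    by (auto intro: null_setsI)
  define U :: "complex set" where "U = {of_real \<tau> | \<tau>. \<tau> \<in> {0..K} \<and> F (of_real \<tau>) = 0}"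
  have lim: "of_real (K/2) islimpt U"
    unfolding islimpt_approachable
  proof (intro allI impI)
    fix e :: real assume e: "e > 0"
    define b where "b = K/2 + min (e/2) (K/4)"
    have b: "K/2 < b" "b < K" "b - K/2 < e" using e K by (auto simp: b_def)
    have "\<not> {K/2<..<b} \<subseteq> N"
    proof
      assume sub: "{K/2<..<b} \<subseteq> N"
      have "0 < emeasure lebesgue {K/2<..<b}"
        using open_pos_measure[of "{K/2<..<b}" "(K/2+b)/2"] b by auto
      also have "\<dots> \<le> emeasure lebesgue N" by (rule emeasure_mono[OF sub]) (use N in auto)
      also have "\<dots> = 0" using N by auto
      finally show False by simp
    qed
    then obtain \<tau> where \<tau>0: "\<tau> \<in> {K/2<..<b}" "\<tau> \<notin> N" by blast
    then have \<tau>: "K/2 < \<tau>" "\<tau> < b" "\<tau> \<notin> N" by auto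
    then have "\<tau> \<in> {0..K}" using K b by auto
    moreover have "F (of_real \<tau>) = 0"
    proof (rule ccontr)
      assume "F (of_real \<tau>) \<noteq> 0"
      then have "\<tau> \<in> {\<tau>\<in>space lebesgue. \<not> (\<tau> \<in> {0..K} \<longrightarrow> F (of_real \<tau>) = 0)}"
        using \<open>\<tau> \<in> {0..K}\<close> by simp
      then show False using N(2) \<tau>(3) by blast
    qed
    ultimately have "\<tau> \<in> {0..K}" "F (of_real \<tau>) = 0" by auto
    show "\<exists>x'\<in>U. x' \<noteq> of_real (K/2) \<and> dist x' (of_real (K/2)) < e"
    proof -
      have d1: "of_real \<tau> \<noteq> (of_real (K/2) :: complex)" using \<tau> by (metis of_real_eq_iff less_irrefl)
      have d2: "dist (of_real \<tau>) (of_real (K/2) :: complex) < e"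
        using \<tau> b by (simp only: dist_of_real) (simp add: dist_real_def)
      have "of_real \<tau> \<in> U" unfolding U_def using \<open>\<tau> \<in> {0..K}\<close> \<open>F (of_real \<tau>) = 0\<close> by blast
      then show ?thesis using d1 d2 by blast
    qed
  qed
  have F0: "F z = 0" for z
    by (rule analytic_continuation[OF holF open_UNIV connected_UNIV _ _ lim]) (auto simp: U_def)
  have Geq: "G1 z = G2 z" for z using F0[of z] by (simp add: F_def)
  have cases: "xh \<bullet> y \<le> I - tmax + \<eta> \<or> Sp \<le> xh \<bullet> y"
    using y unfolding strip_K_eta_def I_def Sp_def by auto
  have xx: "xh \<bullet> xh = 1" using xh by (simp add: power2_norm_eq_inner[symmetric])
  define \<rho> where "\<rho> = min (\<eta> - tmin) (\<epsilon>/8)"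
  have \<rho>: "0 < \<rho>" "\<rho> \<le> \<eta> - tmin" "\<rho> \<le> \<epsilon>/8" using t \<epsilon> by (auto simp: \<rho>_def min_def)
  show False
    using cases
  proof
    assume yc: "xh \<bullet> y \<le> I - tmax + \<eta>"
    define y' where "y' = y - (\<epsilon>/2) *\<^sub>R xh"
    show False
    proof (rule growth_contra[OF w1i sm _ _ _ _ c _ _ Bm Bf sB, of 1 "tmax - I" "ball y' (\<epsilon>/4) \<times> {\<eta>-\<rho><..<\<eta>}" "(y', \<eta> - \<rho>/2)" "\<epsilon>/8"])
      show "1 * s p \<le> tmax - I" if "w1 p \<noteq> 0" for p using sA[OF w1A[OF that]] by simp
      show "open (ball y' (\<epsilon>/4) \<times> {\<eta>-\<rho><..<\<eta>})" by (auto simp: open_Times)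
      show "(y', \<eta> - \<rho>/2) \<in> ball y' (\<epsilon>/4) \<times> {\<eta>-\<rho><..<\<eta>}" using \<rho> \<epsilon> by auto
      show "ball y' (\<epsilon>/4) \<times> {\<eta>-\<rho><..<\<eta>} \<subseteq> B"
      proof
        fix p assume "p \<in> ball y' (\<epsilon>/4) \<times> {\<eta>-\<rho><..<\<eta>}"
        then obtain a b where p: "p = (a, b)" and ab: "a \<in> ball y' (\<epsilon>/4)" "\<eta> - \<rho> < b" "b < \<eta>" by auto
        have "dist y a \<le> dist y y' + dist y' a" by (rule dist_triangle)
        also have "dist y y' = \<epsilon>/2" using xh \<epsilon> by (simp add: y'_def dist_norm)
        finally have "dist y a < \<epsilon>" using ab \<epsilon> by simp
        then show "p \<in> B" using ab \<rho> p by (auto simp: B_def)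
      qed
      show "0 < \<epsilon>/8" using \<epsilon> by simp
      show "tmax - I + \<epsilon>/8 \<le> 1 * s p" if "p \<in> ball y' (\<epsilon>/4) \<times> {\<eta>-\<rho><..<\<eta>}" for p
      proof -
        obtain a b where p: "p = (a, b)" by force
        have "\<bar>xh \<bullet> a - xh \<bullet> y'\<bar> \<le> dist a y'" by (rule inner_dist[OF xh])
        moreover have "dist a y' < \<epsilon>/4" using that by (auto simp: p dist_commute)
        moreover have "xh \<bullet> y' = xh \<bullet> y - \<epsilon>/2" by (simp add: y'_def inner_diff_right xx)
        ultimately show ?thesis using that yc \<rho> by (auto simp: p s_def)
      qed
      fix \<sigma> :: real
      have e1: "\<i> * (- (\<i> * of_real \<sigma>)) * of_real (s p) = (of_real (1 * \<sigma> * s p) :: complex)" for p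
        by simp
      show "(\<integral>p. exp (of_real (1 * \<sigma> * s p)) * w1 p \<partial>lebesgue) =
            (\<integral>p. exp (of_real (1 * \<sigma> * s p)) * of_real (c * indicator B p) \<partial>lebesgue)"
        using Geq[of "- (\<i> * of_real \<sigma>)"] unfolding G1_def G2_def w2_def e1 .
    qed
  next
    assume yc: "Sp \<le> xh \<bullet> y"
    define y' where "y' = y + (\<epsilon>/2) *\<^sub>R xh"
    show False
    proof (rule growth_contra[OF w1i sm _ _ _ _ c _ _ Bm Bf sB, of "-1" "Sp - tmin" "ball y' (\<epsilon>/4) \<times> {tmin<..<tmin+\<rho>}" "(y', tmin + \<rho>/2)" "\<epsilon>/8"])
      show "-1 * s p \<le> Sp - tmin" if "w1 p \<noteq> 0" for p using sA[OF w1A[OF that]] by simp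
      show "open (ball y' (\<epsilon>/4) \<times> {tmin<..<tmin+\<rho>})" by (auto simp: open_Times)
      show "(y', tmin + \<rho>/2) \<in> ball y' (\<epsilon>/4) \<times> {tmin<..<tmin+\<rho>}" using \<rho> \<epsilon> by auto
      show "ball y' (\<epsilon>/4) \<times> {tmin<..<tmin+\<rho>} \<subseteq> B"
      proof
        fix p assume "p \<in> ball y' (\<epsilon>/4) \<times> {tmin<..<tmin+\<rho>}"
        then obtain a b where p: "p = (a, b)" and ab: "a \<in> ball y' (\<epsilon>/4)" "tmin < b" "b < tmin + \<rho>" by auto
        have "dist y a \<le> dist y y' + dist y' a" by (rule dist_triangle)
        also have "dist y y' = \<epsilon>/2" using xh \<epsilon> by (simp add: y'_def dist_norm)
        finally have "dist y a < \<epsilon>" using ab \<epsilon> by simp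
        then show "p \<in> B" using ab \<rho> p by (auto simp: B_def)
      qed
      show "0 < \<epsilon>/8" using \<epsilon> by simp
      show "Sp - tmin + \<epsilon>/8 \<le> -1 * s p" if "p \<in> ball y' (\<epsilon>/4) \<times> {tmin<..<tmin+\<rho>}" for p
      proof -
        obtain a b where p: "p = (a, b)" by force
        have "\<bar>xh \<bullet> a - xh \<bullet> y'\<bar> \<le> dist a y'" by (rule inner_dist[OF xh])
        moreover have "dist a y' < \<epsilon>/4" using that by (auto simp: p dist_commute)
        moreover have "xh \<bullet> y' = xh \<bullet> y + \<epsilon>/2" by (simp add: y'_def inner_add_right xx)
        ultimately show ?thesis using that yc \<rho> by (auto simp: p s_def)
      qed
      fix \<sigma> :: real
      have e1: "\<i> * (\<i> * of_real \<sigma>) * of_real (s p) = (of_real (-1 * \<sigma> * s p) :: complex)" for p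
        by simp
      show "(\<integral>p. exp (of_real (-1 * \<sigma> * s p)) * w1 p \<partial>lebesgue) =
            (\<integral>p. exp (of_real (-1 * \<sigma> * s p)) * of_real (c * indicator B p) \<partial>lebesgue)"
        using Geq[of "\<i> * of_real \<sigma>"] unfolding G1_def G2_def w2_def e1 .
    qed
  qed
qed



lemma transl_int:
  fixes y z xh :: "real^3"
  assumes yz: "xh \<bullet> y = xh \<bullet> z"
  shows "(\<integral>p. indicator (ball y \<epsilon> \<times> {tmin<..<\<eta>}) p *\<^sub>R exp (\<i> * of_real (\<tau> * (snd p - xh \<bullet> fst p))) \<partial>lebesgue)
       = (\<integral>p. indicator (ball z \<epsilon> \<times> {tmin<..<\<eta>}) p *\<^sub>R exp (\<i> * of_real (\<tau> * (snd p - xh \<bullet> fst p))) \<partial>lebesgue)"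
    (is "integral\<^sup>L _ ?g1 = integral\<^sup>L _ ?g2")
proof -
  define v0 :: "(real^3) \<times> real" where "v0 = (y - z, 0)"
  have o1: "open (ball y \<epsilon> \<times> {tmin<..<\<eta>})" "open (ball z \<epsilon> \<times> {tmin<..<\<eta>})"
    by (auto simp: open_Times)
  have m1: "?g1 \<in> borel_measurable borel"
    using o1 by (intro borel_measurable_scaleR borel_measurable_indicator borel_open
        borel_measurable_continuous_onI continuous_intros)
  have m2: "?g2 \<in> borel_measurable borel"
    using o1 by (intro borel_measurable_scaleR borel_measurable_indicator borel_open
        borel_measurable_continuous_onI continuous_intros)
  have "integral\<^sup>L lebesgue ?g1 = integral\<^sup>L lborel ?g1"
    using m1 by (intro integral_completion) simp
  also have "\<dots> = integral\<^sup>L (distr lborel borel ((+) v0)) ?g1"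
    by (simp add: lborel_distr_plus)
  also have "\<dots> = (\<integral>p. ?g1 (v0 + p) \<partial>lborel)"
    using m1 by (intro integral_distr) (auto intro!: borel_measurable_continuous_onI continuous_intros)
  also have "\<dots> = integral\<^sup>L lborel ?g2"
  proof (intro Bochner_Integration.integral_cong refl)
    fix p :: "(real^3) \<times> real"
    obtain a b where p: "p = (a, b)" by force
    have "dist y (y - z + a) = dist z a" by (simp add: dist_norm algebra_simps)
    moreover have "xh \<bullet> (y - z + a) = xh \<bullet> a" using yz by (simp add: inner_add_right inner_diff_right)
    ultimately show "?g1 (v0 + p) = ?g2 p" by (simp add: p v0_def indicator_def)
  qed
  also have "\<dots> = integral\<^sup>L lebesgue ?g2"
    using m2 by (intro integral_completion[symmetric]) simp
  finally show ?thesis .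
qed

lemma bdry_int:
  fixes y xh :: "real^3"
  shows "(\<integral>p. indicator (ball y \<epsilon> \<times> {tmin..\<eta>}) p *\<^sub>R exp (\<i> * of_real (\<tau> * (snd p - xh \<bullet> fst p))) \<partial>lebesgue)
       = (\<integral>p. indicator (ball y \<epsilon> \<times> {tmin<..<\<eta>}) p *\<^sub>R exp (\<i> * of_real (\<tau> * (snd p - xh \<bullet> fst p))) \<partial>lebesgue)"
proof (rule integral_cong_AE)
  have b: "((0::real^3), (1::real)) \<in> Basis" by (simp add: Basis_prod_def)
  define H :: "((real^3) \<times> real) set" where "H = {p. p \<bullet> (0,1) = tmin} \<union> {p. p \<bullet> (0,1) = \<eta>}"
  have "negligible H" unfolding H_def using b by (intro negligible_Un negligible_standard_hyperplane)
  then have H: "H \<in> null_sets lebesgue" by (simp add: negligible_iff_null_sets)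
  show "AE p in lebesgue. indicator (ball y \<epsilon> \<times> {tmin..\<eta>}) p *\<^sub>R exp (\<i> * of_real (\<tau> * (snd p - xh \<bullet> fst p)))
       = indicator (ball y \<epsilon> \<times> {tmin<..<\<eta>}) p *\<^sub>R exp (\<i> * of_real (\<tau> * (snd p - xh \<bullet> fst p)))"
  proof (rule AE_I'[OF H], clarify)
    fix a :: "real^3" and b :: real
    assume "indicator (ball y \<epsilon> \<times> {tmin..\<eta>}) (a, b) *\<^sub>R exp (\<i> * of_real (\<tau> * (snd (a, b) - xh \<bullet> fst (a, b))))
       \<noteq> indicator (ball y \<epsilon> \<times> {tmin<..<\<eta>}) (a, b) *\<^sub>R exp (\<i> * of_real (\<tau> * (snd (a, b) - xh \<bullet> fst (a, b))))"
    moreover have "indicator (ball y \<epsilon> \<times> {tmin..\<eta>}) (a, b) = (indicator (ball y \<epsilon> \<times> {tmin<..<\<eta>}) (a, b) :: real)"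
      if "b \<noteq> tmin" "b \<noteq> \<eta>" using that by (auto simp: indicator_def)
    ultimately have "b = tmin \<or> b = \<eta>" by metis
    then show "(a, b) \<in> H" by (auto simp: H_def inner_Pair)
  qed
  have o1: "open (ball y \<epsilon> \<times> {tmin<..<\<eta>})" by (auto simp: open_Times)
  have "ball y \<epsilon> \<times> {tmin..\<eta>} = (ball y \<epsilon> \<times> UNIV) \<inter> (UNIV \<times> {tmin..\<eta>})" by auto
  moreover have "(ball y \<epsilon> \<times> UNIV) \<in> sets borel"
    by (intro borel_open open_Times) auto
  moreover have "(UNIV \<times> {tmin..\<eta>}) \<in> sets borel"
    by (intro borel_closed closed_Times) auto
  ultimately have o2: "ball y \<epsilon> \<times> {tmin..\<eta>} \<in> sets borel" by (metis sets.Int)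
  show "(\<lambda>p. indicator (ball y \<epsilon> \<times> {tmin..\<eta>}) p *\<^sub>R exp (\<i> * of_real (\<tau> * (snd p - xh \<bullet> fst p)))) \<in> borel_measurable lebesgue"
    using o2 by (intro measurable_completion) (simp, intro borel_measurable_scaleR borel_measurable_indicator
        borel_measurable_continuous_onI continuous_intros)
  show "(\<lambda>p. indicator (ball y \<epsilon> \<times> {tmin<..<\<eta>}) p *\<^sub>R exp (\<i> * of_real (\<tau> * (snd p - xh \<bullet> fst p)))) \<in> borel_measurable lebesgue"
    using o1 by (intro measurable_completion) (simp, intro borel_measurable_scaleR borel_measurable_indicator borel_open
        borel_measurable_continuous_onI continuous_intros)
qed



lemma part1:
  fixes D :: "(real^3) set" and xh y :: "real^3"
  assumes D: "open D" "bounded D" "D \<noteq> {}" "connected D" and t: "tmin < tmax"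
    and y: "y \<in> strip_K D xh"
  shows "\<exists>\<epsilon>0>0. \<forall>\<epsilon>\<in>{0<..<\<epsilon>0}. \<forall>\<eta>\<in>{tmin<..tmax}. in_range_L D tmin tmax K xh (phi_test tmin xh y \<eta> \<epsilon>)"
proof -
  let ?img = "(\<lambda>z. xh \<bullet> z) ` D"
  have bdd: "bounded ?img"
    using D(2) by (intro bounded_linear_image bounded_linear_inner_right)
  have "connected ?img" by (intro connected_continuous_image continuous_intros D(4))
  then have iv: "is_interval ?img" by (simp add: is_interval_connected_1)
  have yI: "Inf ?img < xh \<bullet> y" "xh \<bullet> y < Sup ?img" using y by (auto simp: strip_K_def)
  obtain a where a: "a \<in> ?img" "a < xh \<bullet> y"
    using yI(1) D(3) bdd by (auto simp: cInf_less_iff bounded_imp_bdd_below)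
  obtain b where b: "b \<in> ?img" "xh \<bullet> y < b"
    using yI(2) D(3) bdd by (auto simp: less_cSup_iff bounded_imp_bdd_above)
  have "xh \<bullet> y \<in> ?img" using mem_is_interval_1_I[OF iv a(1) b(1)] a b by auto
  then obtain z where z: "z \<in> D" "xh \<bullet> z = xh \<bullet> y" by auto
  obtain \<epsilon>0 where \<epsilon>0: "\<epsilon>0 > 0" "ball z \<epsilon>0 \<subseteq> D" using D(1) z(1) openE by blast
  show ?thesis
  proof (intro exI[of _ \<epsilon>0] conjI ballI)
    show "\<epsilon>0 > 0" by fact
    fix \<epsilon> \<eta> assume \<epsilon>: "\<epsilon> \<in> {0<..<\<epsilon>0}" and \<eta>: "\<eta> \<in> {tmin<..tmax}"
    define A where "A = D \<times> {tmin<..<tmax}"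
    define E where "E = ball z \<epsilon> \<times> {tmin<..<\<eta>}"
    define c where "c = 1 / ((\<eta> - tmin) * measure lebesgue (ball y \<epsilon>))"
    define u where "u p = (of_real c * indicator E p :: complex)" for p
    have EA: "E \<subseteq> A" using \<epsilon> \<epsilon>0 \<eta> by (auto simp: E_def A_def)
    have "A \<in> lmeasurable" unfolding A_def using D
      by (intro lmeasurable_open) (auto simp: open_Times bounded_Times)
    then have Am[measurable]: "A \<in> sets lebesgue" by (auto simp: fmeasurable_def)
    have "E \<in> lmeasurable" unfolding E_def
      by (intro lmeasurable_open) (auto simp: open_Times bounded_Times)
    then have Em[measurable]: "E \<in> sets lebesgue" and Ef: "emeasure lebesgue E < \<infinity>"
      by (auto simp: fmeasurable_def)
    have L2: "L2_on (D \<times> {tmin<..<tmax}) u"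
      unfolding L2_on_def set_borel_measurable_def set_integrable_def A_def[symmetric]
    proof
      show "(\<lambda>x. indicator A x *\<^sub>R u x) \<in> borel_measurable lebesgue"
        unfolding u_def by measurable
      have "(\<lambda>x. indicator A x *\<^sub>R (cmod (u x))\<^sup>2) = (\<lambda>x. c^2 * indicator E x)"
        using EA by (auto simp: u_def indicator_def fun_eq_iff norm_mult)
      then show "integrable lebesgue (\<lambda>x. indicator A x *\<^sub>R (cmod (u x))\<^sup>2)"
        using Em Ef by (simp add: integrable_mult_right)
    qed
    have eq: "phi_test tmin xh y \<eta> \<epsilon> \<tau> = L_op D tmin tmax xh u \<tau>" for \<tau>
    proof -
      define f where "f p = exp (\<i> * of_real (\<tau> * (snd p - xh \<bullet> fst p)))" for p :: "(real^3) \<times> real"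
      have "L_op D tmin tmax xh u \<tau> = (\<integral>p. of_real c * (indicator E p *\<^sub>R f p) \<partial>lebesgue)"
        unfolding L_op_def set_lebesgue_integral_def A_def[symmetric]
      proof (intro Bochner_Integration.integral_cong refl)
        fix p :: "(real^3) \<times> real"
        obtain a b where p: "p = (a, b)" by force
        show "indicator A p *\<^sub>R (case p of (y, t) \<Rightarrow> exp (\<i> * of_real (\<tau> * (t - xh \<bullet> y))) * u (y, t))
              = of_real c * (indicator E p *\<^sub>R f p)"
          using EA by (auto simp: p u_def f_def indicator_def)
      qed
      also have "\<dots> = of_real c * (\<integral>p. indicator E p *\<^sub>R f p \<partial>lebesgue)"
        by (rule integral_mult_right_zero)
      also have "(\<integral>p. indicator E p *\<^sub>R f p \<partial>lebesgue) = (\<integral>p. indicator (ball y \<epsilon> \<times> {tmin..\<eta>}) p *\<^sub>R f p \<partial>lebesgue)"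
        unfolding f_def E_def using bdry_int[of y \<epsilon> tmin \<eta> \<tau> xh] transl_int[of xh y z \<epsilon> tmin \<eta> \<tau>] z(2) by simp
      also have "of_real c * \<dots> = phi_test tmin xh y \<eta> \<epsilon> \<tau>"
        unfolding phi_test_def set_lebesgue_integral_def c_def
        by (intro arg_cong[where f="\<lambda>x. _ * x"] Bochner_Integration.integral_cong refl)
          (auto simp: f_def split: prod.splits)
      finally show ?thesis by simp
    qed
    show "in_range_L D tmin tmax K xh (phi_test tmin xh y \<eta> \<epsilon>)"
      unfolding in_range_L_def using L2 eq by (intro exI[of _ u]) auto
  qed
qed



theorem lemma3p4:
  fixes D :: "(real^3) set" and tmin tmax kmin kmax K c0 :: real
    and S :: "real^3 \<Rightarrow> real \<Rightarrow> real" and xh :: "real^3"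
  assumes D: "lipschitz_domain D" "bounded D" "connected (- closure D)"
    and t: "0 \<le> tmin" "tmin < tmax"
    and S_meas: "\<forall>t\<in>{tmin..tmax}. set_borel_measurable lebesgue D (\<lambda>x. S x t)"
    and S_bdd: "\<forall>t\<in>{tmin..tmax}. \<exists>M. AE x in lebesgue. x \<in> D \<longrightarrow> \<bar>S x t\<bar> \<le> M"
    and S_cont: "\<forall>t\<in>{tmin..tmax}. \<forall>e>0. \<exists>\<delta>>0. \<forall>s\<in>{tmin..tmax}. \<bar>s - t\<bar> < \<delta> \<longrightarrow>
                   (AE x in lebesgue. x \<in> D \<longrightarrow> \<bar>S x s - S x t\<bar> \<le> e)"
    and S_pos: "c0 > 0" "\<forall>t\<in>{tmin..tmax}. AE x in lebesgue. x \<in> D \<longrightarrow> S x t \<ge> c0"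
    and k: "0 \<le> kmin" "kmin < kmax" "K = (kmax - kmin) / 2"
    and xh: "norm xh = 1"
  shows "(\<forall>y\<in>strip_K D xh. \<exists>\<epsilon>0>0. \<forall>\<epsilon>\<in>{0<..<\<epsilon>0}. \<forall>\<eta>\<in>{tmin<..tmax}.
            in_range_L D tmin tmax K xh (phi_test tmin xh y \<eta> \<epsilon>))
       \<and> (\<forall>\<eta>\<in>{tmin<..tmax}. \<forall>y. y \<notin> closure (strip_K_eta D tmax \<eta> xh) \<longrightarrow>
            (\<forall>\<epsilon>>0. \<not> in_range_L D tmin tmax K xh (phi_test tmin xh y \<eta> \<epsilon>)))"
proof -
  have Do: "open D" "connected D" "D \<noteq> {}" using D(1) by (auto simp: lipschitz_domain_def)
  have K: "0 < K" using k by simp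
  have P1: "\<forall>y\<in>strip_K D xh. \<exists>\<epsilon>0>0. \<forall>\<epsilon>\<in>{0<..<\<epsilon>0}. \<forall>\<eta>\<in>{tmin<..tmax}.
            in_range_L D tmin tmax K xh (phi_test tmin xh y \<eta> \<epsilon>)"
    using part1[OF Do(1) D(2) Do(3) Do(2) t(2)] by blast
  have P2: "\<forall>\<eta>\<in>{tmin<..tmax}. \<forall>y. y \<notin> closure (strip_K_eta D tmax \<eta> xh) \<longrightarrow>
            (\<forall>\<epsilon>>0. \<not> in_range_L D tmin tmax K xh (phi_test tmin xh y \<eta> \<epsilon>))"
  proof (intro ballI allI impI)
    fix \<eta> y and \<epsilon> :: real
    assume \<eta>: "\<eta> \<in> {tmin<..tmax}" and y: "y \<notin> closure (strip_K_eta D tmax \<eta> xh)" and \<epsilon>: "\<epsilon> > 0"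
    have "y \<notin> strip_K_eta D tmax \<eta> xh" using y closure_subset by blast
    then show "\<not> in_range_L D tmin tmax K xh (phi_test tmin xh y \<eta> \<epsilon>)"
      using part2[OF Do(1) D(2) Do(3) _ _ K xh \<epsilon>] \<eta> by auto
  qed
  show ?thesis using P1 P2 by blast
qed

end
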